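(* Let $m_1,\dots,m_r,n$ be positive integers with $m=\sum_{i=1}^r m_i\le n$. Suppose that $\sum_{i=1}^r\lfloor m_i n/(m+1)\rfloor<\lfloor mn/(m+1)\rfloor$, or that there is some $i\in[r]$ with $m_i n/(m+1)<\lceil m_i n/(m+2)\rceil$. Then $(m+1)\nmid n$, and neither $K_{m_1 n,\dots,m_r n}$ nor $K_{m_1,\dots,m_r}\times K_n$ is equitably $\lfloor mn/(m+1)\rfloor$-colorable.
   Context: A (proper) $k$-coloring of a graph $G$ is a map $f:V(G)\to\{1,\dots,k\}$ with $f(x)\ne f(y)$ whenever $xy\in E(G)$; an equitable $k$-coloring is a $k$-coloring in which any two color classes differ in size by at most $1$; $G$ is equitably $k$-colorable if it has one. $K_{a_1,\dots,a_r}$ denotes the complete multipartite graph with parts of sizes $a_1,\dots,a_r$; $K_n$ is the complete graph on $n$ vertices. The Kronecker product $G\times H$ has vertex set $V(G)\times V(H)$, with $(x,y)$ adjacent to $(x',y')$ iff $xx'\in E(G)$ and $yy'\in E(H)$. $[r]=\{1,\dots,r\}$. *)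

theory Defs
  imports Complex_Main
begin

text \<open>A (simple) graph is given by a vertex set V and a symmetric irreflexive
adjacency relation E on V.\<close>

definition proper_coloring :: "'a set \<Rightarrow> ('a \<Rightarrow> 'a \<Rightarrow> bool) \<Rightarrow> nat \<Rightarrow> ('a \<Rightarrow> nat) \<Rightarrow> bool" where
  "proper_coloring V E k f \<longleftrightarrow>
     (\<forall>x\<in>V. f x \<in> {1..k}) \<and> (\<forall>x\<in>V. \<forall>y\<in>V. E x y \<longrightarrow> f x \<noteq> f y)"

definition equitable_coloring :: "'a set \<Rightarrow> ('a \<Rightarrow> 'a \<Rightarrow> bool) \<Rightarrow> nat \<Rightarrow> ('a \<Rightarrow> nat) \<Rightarrow> bool" where
  "equitable_coloring V E k f \<longleftrightarrow> proper_coloring V E k f \<and>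
     (\<forall>c\<in>{1..k}. \<forall>d\<in>{1..k}.
        card {x\<in>V. f x = c} \<le> card {x\<in>V. f x = d} + 1)"

definition equitably_colorable :: "'a set \<Rightarrow> ('a \<Rightarrow> 'a \<Rightarrow> bool) \<Rightarrow> nat \<Rightarrow> bool" where
  "equitably_colorable V E k \<longleftrightarrow> (\<exists>f. equitable_coloring V E k f)"

text \<open>Complete multipartite graph K_{a_1,...,a_r}: vertex (i,j) lies in part i
(1 \<le> i \<le> r), j < a i; two vertices are adjacent iff they lie in different parts.\<close>

definition multipartite_V :: "nat \<Rightarrow> (nat \<Rightarrow> nat) \<Rightarrow> (nat \<times> nat) set" where
  "multipartite_V r a = {(i, j). i \<in> {1..r} \<and> j < a i}"

definition multipartite_E :: "(nat \<times> nat) \<Rightarrow> (nat \<times> nat) \<Rightarrow> bool" where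
  "multipartite_E x y \<longleftrightarrow> fst x \<noteq> fst y"

definition complete_V :: "nat \<Rightarrow> nat set" where
  "complete_V n = {0..<n}"

definition complete_E :: "nat \<Rightarrow> nat \<Rightarrow> bool" where
  "complete_E x y \<longleftrightarrow> x \<noteq> y"

definition kron_V :: "'a set \<Rightarrow> 'b set \<Rightarrow> ('a \<times> 'b) set" where
  "kron_V V1 V2 = V1 \<times> V2"

definition kron_E :: "('a \<Rightarrow> 'a \<Rightarrow> bool) \<Rightarrow> ('b \<Rightarrow> 'b \<Rightarrow> bool) \<Rightarrow> ('a \<times> 'b) \<Rightarrow> ('a \<times> 'b) \<Rightarrow> bool" where
  "kron_E E1 E2 p q \<longleftrightarrow> E1 (fst p) (fst q) \<and> E2 (snd p) (snd q)"

end

theory Submission imports Defs begin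
lemma arith_k:
  fixes m n k :: nat
  assumes mn: "m \<le> n" and kdef: "k = m*n div (m+1)" and k1: "k \<ge> 1"
  shows "m*n \<le> (m+2)*k"
proof -
  define \<rho> where "\<rho> = m*n mod (m+1)"
  have eq: "m*n = (m+1)*k + \<rho>" unfolding kdef \<rho>_def by (metis div_mult_mod_eq mult.commute)
  have rl: "\<rho> \<le> m" unfolding \<rho>_def
    by (metis Suc_eq_plus1 less_Suc_eq_le mod_less_divisor zero_less_Suc)
  show ?thesis
  proof (cases "k \<ge> m")
    case True then show ?thesis using eq rl by simp
  next
    case False
    then have "k + 1 \<le> m" by simp
    have "m*n < (m+1)*(k+1)" using eq rl by simp
    also have "\<dots> \<le> (m+1)*m" using \<open>k+1 \<le> m\<close> by (metis mult_le_mono2)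
    finally have "m*n < m*(m+1)" by (simp add: mult.commute)
    then have "n < m+1" by (metis mult_less_cancel1)
    then have nm: "n = m" using mn by simp
    obtain j where j: "m = Suc j" using \<open>k+1 \<le> m\<close> by (cases m) auto
    have "m*n = (m+1)*j + 1" using nm j by (simp add: algebra_simps)
    then have "\<rho> = 1" unfolding \<rho>_def using j
      by (metis Suc_eq_plus1 add.commute mod_mult_self2 mod_less One_nat_def Suc_less_eq zero_less_Suc mult.commute)
    then show ?thesis using eq k1 by simp
  qed
qed
lemma core:
  fixes V :: "'a set" and f p :: "'a \<Rightarrow> nat" and mm :: "nat \<Rightarrow> nat"
  assumes finV: "finite V"
    and fr: "\<forall>x\<in>V. f x \<in> {1..k}"
    and bal: "\<forall>c\<in>{1..k}. \<forall>d\<in>{1..k}. card {x\<in>V. f x = c} \<le> card {x\<in>V. f x = d} + 1"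
    and pr: "\<forall>x\<in>V. p x \<in> {1..r}"
    and pc: "\<forall>i\<in>{1..r}. card {x\<in>V. p x = i} = mm i * n"
    and sp: "\<forall>x\<in>V. \<forall>y\<in>V. f x = f y \<longrightarrow> card {z\<in>V. f z = f x} > m \<longrightarrow> p x = p y"
    and mdef: "m = (\<Sum>i=1..r. mm i)" and mpos: "m > 0" and mn: "m \<le> n"
    and kdef: "k = m*n div (m+1)"
    and hyp: "(\<Sum>i=1..r. mm i * n div (m+1)) < k
           \<or> (\<exists>i\<in>{1..r}. real (mm i * n) / real (m + 1)
                 < of_int \<lceil>real (mm i * n) / real (m + 2)\<rceil>)"
  shows False
proof -
  define c where "c j = card {x\<in>V. f x = j}" for j
  have cardV: "card V = m*n"
  proof -
    have "card V = (\<Sum>i\<in>{1..r}. card {x\<in>V. p x = i})"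
    proof -
      have im: "p ` V \<subseteq> {1..r}" using pr by auto
      show ?thesis using sum.group[OF finV finite_atLeastAtMost im, of "\<lambda>_. 1::nat"] by simp
    qed
    also have "\<dots> = (\<Sum>i\<in>{1..r}. mm i * n)" using pc by simp
    also have "\<dots> = m*n" unfolding mdef by (simp add: sum_distrib_right)
    finally show ?thesis .
  qed
  have sumc: "(\<Sum>j\<in>{1..k}. c j) = m*n"
  proof -
    have im: "f ` V \<subseteq> {1..k}" using fr by auto
    show ?thesis using sum.group[OF finV finite_atLeastAtMost im, of "\<lambda>_. 1::nat"] cardV
      unfolding c_def by simp
  qed
  have "V \<noteq> {}" using cardV mpos mn by (metis card.empty mult_is_0 not_gr_zero le_zero_eq)
  then obtain x0 where "x0 \<in> V" by blast
  then have k1: "k \<ge> 1" using fr by auto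
  have kle: "(m+1)*k \<le> m*n" unfolding kdef by (metis mult.commute div_times_less_eq_dividend)
  have kge: "m*n \<le> (m+2)*k" using arith_k[OF mn kdef k1] .
  have lower: "\<forall>j\<in>{1..k}. c j \<ge> m+1"
  proof (rule ccontr)
    assume "\<not> ?thesis"
    then obtain j0 where j0': "j0 \<in> {1..k}" "\<not> m+1 \<le> c j0" by blast
    then have j0: "j0 \<in> {1..k}" "c j0 \<le> m" by auto
    have "\<forall>j\<in>{1..k}. c j \<le> m+1"
    proof
      fix j assume "j \<in> {1..k}"
      then have "c j \<le> c j0 + 1" using bal j0(1) unfolding c_def by blast
      then show "c j \<le> m+1" using j0(2) by simp
    qed
    then have s1: "(\<Sum>j\<in>{1..k}-{j0}. c j) \<le> of_nat (card ({1..k}-{j0})) * (m+1)"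
      by (intro sum_bounded_above) auto
    have "card ({1..k}-{j0}) = k - 1" using j0 by simp
    with s1 have s2: "(\<Sum>j\<in>{1..k}-{j0}. c j) \<le> (k-1) * (m+1)" by (simp only: of_nat_id)
    have s3: "(\<Sum>j\<in>{1..k}. c j) = c j0 + (\<Sum>j\<in>{1..k}-{j0}. c j)"
      using j0 by (simp add: sum.remove)
    have "m*n \<le> m + (k-1)*(m+1)" using s2 s3 sumc j0(2) by linarith
    moreover have "m + (k-1)*(m+1) < k*(m+1)" using k1
      by (cases k) auto
    ultimately show False using kle by (simp add: mult.commute)
  qed
  have upper: "\<forall>j\<in>{1..k}. c j \<le> m+2"
  proof (rule ccontr)
    assume "\<not> ?thesis"
    then obtain j0 where j0': "j0 \<in> {1..k}" "\<not> c j0 \<le> m+2" by blast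
    then have j0: "j0 \<in> {1..k}" "c j0 \<ge> m+3" by auto
    have "\<forall>j\<in>{1..k}. c j \<ge> m+2"
    proof
      fix j assume "j \<in> {1..k}"
      then have "c j0 \<le> c j + 1" using bal j0(1) unfolding c_def by blast
      then show "c j \<ge> m+2" using j0(2) by simp
    qed
    then have s1: "of_nat (card ({1..k}-{j0})) * (m+2) \<le> (\<Sum>j\<in>{1..k}-{j0}. c j)"
      by (intro sum_bounded_below) auto
    have "card ({1..k}-{j0}) = k - 1" using j0 by simp
    with s1 have s2: "(k-1) * (m+2) \<le> (\<Sum>j\<in>{1..k}-{j0}. c j)" by (simp only: of_nat_id)
    have s3: "(\<Sum>j\<in>{1..k}. c j) = c j0 + (\<Sum>j\<in>{1..k}-{j0}. c j)"
      using j0 by (simp add: sum.remove)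
    have "m+3 + (k-1)*(m+2) \<le> m*n" using s2 s3 sumc j0(2) by linarith
    moreover have "k*(m+2) < m+3 + (k-1)*(m+2)" using k1
      by (cases k) auto
    ultimately show False using kge by (simp add: mult.commute)
  qed
  define q where "q j = p (SOME x. x \<in> V \<and> f x = j)" for j
  have ne: "\<exists>x. x \<in> V \<and> f x = j" if "j \<in> {1..k}" for j
  proof -
    have "c j \<ge> m+1" using lower that by blast
    then have "c j > 0" by simp
    then have "{x\<in>V. f x = j} \<noteq> {}" unfolding c_def by (metis card.empty less_irrefl)
    then show ?thesis by auto
  qed
  have qp: "p x = q (f x)" if "x \<in> V" for x
  proof -
    have fx: "f x \<in> {1..k}" using fr that by auto
    define y where "y = (SOME y. y \<in> V \<and> f y = f x)"
    have y: "y \<in> V \<and> f y = f x" unfolding y_def by (rule someI_ex) (use ne fx in blast)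
    have "c (f x) \<ge> m+1" using lower fx by blast
    then have "card {z\<in>V. f z = f x} > m" unfolding c_def by simp
    then have "p x = p y" using sp[rule_format, OF that, of y] y by simp
    then show ?thesis unfolding q_def y_def by simp
  qed
  have qr: "q j \<in> {1..r}" if jk: "j \<in> {1..k}" for j
  proof -
    obtain x where "x \<in> V" "f x = j" using ne[OF jk] by blast
    then show ?thesis using qp pr by force
  qed
  define T where "T i = {j\<in>{1..k}. q j = i}" for i
  have partsum: "(\<Sum>j\<in>T i. c j) = mm i * n" if i: "i \<in> {1..r}" for i
  proof -
    have im: "f ` {x\<in>V. p x = i} \<subseteq> T i" using fr qp unfolding T_def by auto
    have fT: "finite (T i)" unfolding T_def by auto
    have "(\<Sum>j\<in>T i. card {x\<in>{x\<in>V. p x = i}. f x = j}) = card {x\<in>V. p x = i}"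
      using sum.group[OF _ fT im, of "\<lambda>_. 1::nat"] finV by simp
    moreover have "{x\<in>{x\<in>V. p x = i}. f x = j} = {x\<in>V. f x = j}" if "j \<in> T i" for j
      using that qp unfolding T_def by auto
    ultimately show ?thesis using pc i unfolding c_def by simp
  qed
  have tsum: "(\<Sum>i\<in>{1..r}. card (T i)) = k"
  proof -
    have im: "q ` {1..k} \<subseteq> {1..r}" using qr by auto
    show ?thesis using sum.group[OF finite_atLeastAtMost finite_atLeastAtMost im, of "\<lambda>_. 1::nat"]
      unfolding T_def by simp
  qed
  have tlo: "card (T i) * (m+1) \<le> mm i * n" if "i \<in> {1..r}" for i
  proof -
    have "of_nat (card (T i)) * (m+1) \<le> (\<Sum>j\<in>T i. c j)"
      using lower unfolding T_def by (intro sum_bounded_below) auto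
    then show ?thesis using partsum that by simp
  qed
  have thi: "mm i * n \<le> card (T i) * (m+2)" if "i \<in> {1..r}" for i
  proof -
    have "(\<Sum>j\<in>T i. c j) \<le> of_nat (card (T i)) * (m+2)"
      using upper unfolding T_def by (intro sum_bounded_above) auto
    then show ?thesis using partsum that by simp
  qed
  show False
    using hyp
  proof
    assume h: "(\<Sum>i=1..r. mm i * n div (m+1)) < k"
    have "card (T i) \<le> mm i * n div (m+1)" if "i \<in> {1..r}" for i
      using tlo[OF that] by (simp add: less_eq_div_iff_mult_less_eq)
    then have "(\<Sum>i=1..r. card (T i)) \<le> (\<Sum>i=1..r. mm i * n div (m+1))"
      by (intro sum_mono) auto
    then show False using h tsum by simp
  next
    assume "\<exists>i\<in>{1..r}. real (mm i * n) / real (m + 1)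
                 < of_int \<lceil>real (mm i * n) / real (m + 2)\<rceil>"
    then obtain i where i: "i \<in> {1..r}" and lt: "real (mm i * n) / real (m + 1)
                 < of_int \<lceil>real (mm i * n) / real (m + 2)\<rceil>" by blast
    have "real (mm i * n) \<le> real (card (T i)) * real (m+2)"
      using thi[OF i] by (metis of_nat_le_iff of_nat_mult)
    then have "real (mm i * n) / real (m + 2) \<le> real (card (T i))"
      by (simp add: divide_le_eq)
    then have c1: "\<lceil>real (mm i * n) / real (m + 2)\<rceil> \<le> int (card (T i))"
      by (simp add: ceiling_le_iff)
    have "real (card (T i)) * real (m+1) \<le> real (mm i * n)"
      using tlo[OF i] by (metis of_nat_le_iff of_nat_mult)
    then have "real (card (T i)) \<le> real (mm i * n) / real (m + 1)"
      by (simp add: le_divide_eq)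
    moreover have "real_of_int \<lceil>real (mm i * n) / real (m + 2)\<rceil> \<le> real (card (T i))"
      using c1 by (metis of_int_le_iff of_int_of_nat_eq)
    ultimately show False using lt by linarith
  qed
qed

lemma mV: "multipartite_V r a = (SIGMA i:{1..r}. {..<a i})"
  by (auto simp: multipartite_V_def)

lemma card_S: "card (SIGMA i:{1..r}. {..<(a::nat\<Rightarrow>nat) i}) = (\<Sum>i=1..r. a i)"
  by (simp add: card_SigmaI)

lemma part1: "i \<in> {1..r} \<Longrightarrow> {x \<in> (SIGMA i:{1..r}. {..<(a::nat\<Rightarrow>nat) i}). fst x = i} = {i} \<times> {..<a i}"
  by auto

lemma part2: "i \<in> {1..r} \<Longrightarrow> {x \<in> (SIGMA i:{1..r}. {..<(a::nat\<Rightarrow>nat) i}) \<times> {0..<n}. fst (fst x) = i}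
   = ({i} \<times> {..<a i}) \<times> {0..<n}"
  by auto

lemma kron_sp:
  assumes pc: "proper_coloring ((SIGMA i:{1..r}. {..<(mm::nat\<Rightarrow>nat) i}) \<times> {0..<n}) (kron_E multipartite_E complete_E) k f"
    and x: "x \<in> (SIGMA i:{1..r}. {..<mm i}) \<times> {0..<n}"
    and y: "y \<in> (SIGMA i:{1..r}. {..<mm i}) \<times> {0..<n}"
    and fxy: "f x = f y" and ne: "fst (fst x) \<noteq> fst (fst y)"
  shows "card {z \<in> (SIGMA i:{1..r}. {..<mm i}) \<times> {0..<n}. f z = f x} \<le> (\<Sum>i=1..r. mm i)"
proof -
  let ?S = "SIGMA i:{1..r}. {..<mm i}"
  have noadj: "\<not> kron_E multipartite_E complete_E u v"
    if "u \<in> ?S \<times> {0..<n}" "v \<in> ?S \<times> {0..<n}" "f u = f v" for u v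
    using pc that unfolding proper_coloring_def by blast
  have sxy: "snd x = snd y" using noadj[OF x y fxy] ne
    unfolding kron_E_def multipartite_E_def complete_E_def by auto
  have sub: "{z \<in> ?S \<times> {0..<n}. f z = f x} \<subseteq> ?S \<times> {snd x}"
  proof
    fix z assume z: "z \<in> {z \<in> ?S \<times> {0..<n}. f z = f x}"
    then have zV: "z \<in> ?S \<times> {0..<n}" and fz: "f z = f x" by auto
    have "snd z = snd x"
    proof (rule ccontr)
      assume a: "snd z \<noteq> snd x"
      have "fst (fst z) = fst (fst x)" using noadj[OF zV x fz] a
        unfolding kron_E_def multipartite_E_def complete_E_def by auto
      then have "fst (fst z) \<noteq> fst (fst y)" using ne by simp
      then have "snd z = snd y" using noadj[OF zV y] fz fxy
        unfolding kron_E_def multipartite_E_def complete_E_def by auto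
      then show False using a sxy by simp
    qed
    then show "z \<in> ?S \<times> {snd x}" using zV by (cases z) auto
  qed
  have "card {z \<in> ?S \<times> {0..<n}. f z = f x} \<le> card (?S \<times> {snd x})"
    by (rule card_mono[OF _ sub]) auto
  also have "\<dots> = card ?S" by (simp add: card_cartesian_product)
  also have "\<dots> = (\<Sum>i=1..r. mm i)" by (rule card_S)
  finally show ?thesis .
qed

theorem mainTheorem5:
  fixes r n :: nat and mm :: "nat \<Rightarrow> nat"
  assumes pos: "\<forall>i\<in>{1..r}. mm i > 0"
    and npos: "n > 0"
    and le: "(\<Sum>i=1..r. mm i) \<le> n"
    and hyp: "(\<Sum>i=1..r. \<lfloor>real (mm i * n) / real ((\<Sum>i=1..r. mm i) + 1)\<rfloor>)
                < \<lfloor>real ((\<Sum>i=1..r. mm i) * n) / real ((\<Sum>i=1..r. mm i) + 1)\<rfloor>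
           \<or> (\<exists>i\<in>{1..r}. real (mm i * n) / real ((\<Sum>i=1..r. mm i) + 1)
                 < of_int \<lceil>real (mm i * n) / real ((\<Sum>i=1..r. mm i) + 2)\<rceil>)"
  shows "\<not> ((\<Sum>i=1..r. mm i) + 1 dvd n)
    \<and> \<not> equitably_colorable (multipartite_V r (\<lambda>i. mm i * n)) multipartite_E
          (nat \<lfloor>real ((\<Sum>i=1..r. mm i) * n) / real ((\<Sum>i=1..r. mm i) + 1)\<rfloor>)
    \<and> \<not> equitably_colorable (kron_V (multipartite_V r mm) (complete_V n))
          (kron_E multipartite_E complete_E)
          (nat \<lfloor>real ((\<Sum>i=1..r. mm i) * n) / real ((\<Sum>i=1..r. mm i) + 1)\<rfloor>)"
proof -
  define m where "m = (\<Sum>i=1..r. mm i)"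
  define k where "k = m*n div (m+1)"
  have knat: "nat \<lfloor>real (m * n) / real (m + 1)\<rfloor> = k"
    unfolding k_def floor_divide_of_nat_eq by simp
  have hyp': "(\<Sum>i=1..r. mm i * n div (m+1)) < k
           \<or> (\<exists>i\<in>{1..r}. real (mm i * n) / real (m + 1)
                 < of_int \<lceil>real (mm i * n) / real (m + 2)\<rceil>)"
  proof -
    have "(\<Sum>i=1..r. \<lfloor>real (mm i * n) / real (m + 1)\<rfloor>) = int (\<Sum>i=1..r. mm i * n div (m+1))"
      unfolding floor_divide_of_nat_eq by simp
    moreover have "\<lfloor>real (m * n) / real (m + 1)\<rfloor> = int k"
      unfolding k_def floor_divide_of_nat_eq by simp
    ultimately show ?thesis using hyp unfolding m_def[symmetric] by linarith
  qed
  have r1: "r \<ge> 1"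
  proof (rule ccontr)
    assume "\<not> r \<ge> 1"
    then have "r = 0" by simp
    then show False using hyp' unfolding k_def m_def by simp
  qed
  have mpos: "m > 0"
  proof -
    have "mm 1 \<le> m" unfolding m_def using r1
      by (intro member_le_sum) auto
    moreover have "mm 1 > 0" using pos r1 by auto
    ultimately show ?thesis by simp
  qed
  have mn: "m \<le> n" using le unfolding m_def .
  have ndvd: "\<not> (m + 1 dvd n)"
  proof
    assume "m + 1 dvd n"
    then obtain d where d: "n = (m+1)*d" by blast
    have e1: "mm i * n div (m+1) = mm i * d" for i
      unfolding d by (metis mult.left_commute nonzero_mult_div_cancel_left add_gr_0 zero_less_one less_not_refl)
    have "(\<Sum>i=1..r. mm i * n div (m+1)) = m * d"
    proof -
      have "(\<Sum>i=1..r. mm i * n div (m+1)) = (\<Sum>i=1..r. mm i * d)" by (simp only: e1)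
      also have "\<dots> = m * d" unfolding m_def by (simp add: sum_distrib_right)
      finally show ?thesis .
    qed
    moreover have "k = m * d" unfolding k_def e1[of 1, symmetric] d
      by (metis mult.left_commute nonzero_mult_div_cancel_left add_gr_0 zero_less_one less_not_refl)
    moreover have "\<not> real (mm i * n) / real (m + 1) < of_int \<lceil>real (mm i * n) / real (m + 2)\<rceil>" for i
    proof -
      have eq: "real (mm i * n) / real (m + 1) = real (mm i * d)"
        unfolding d by (simp add: field_simps)
      have "real (mm i * n) / real (m + 2) \<le> real (mm i * n) / real (m + 1)"
        by (intro divide_left_mono) auto
      then have "real (mm i * n) / real (m + 2) \<le> real_of_int (int (mm i * d))"
        using eq by simp
      then have "\<lceil>real (mm i * n) / real (m + 2)\<rceil> \<le> int (mm i * d)"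
        by (simp only: ceiling_le_iff)
      then have "real_of_int \<lceil>real (mm i * n) / real (m + 2)\<rceil> \<le> real (mm i * d)"
        by (metis of_int_le_iff of_int_of_nat_eq)
      then show ?thesis using eq by linarith
    qed
    ultimately show False using hyp' by auto
  qed
  have g1: "\<not> equitably_colorable (multipartite_V r (\<lambda>i. mm i * n)) multipartite_E k"
  proof
    assume "equitably_colorable (multipartite_V r (\<lambda>i. mm i * n)) multipartite_E k"
    then obtain f where f: "equitable_coloring (SIGMA i:{1..r}. {..<mm i * n}) multipartite_E k f"
      unfolding equitably_colorable_def mV by blast
    show False
    proof (rule core[where V="SIGMA i:{1..r}. {..<mm i * n}" and f=f and p=fst and k=k and r=r
          and mm=mm and n=n and m=m])
      show "finite (SIGMA i:{1..r}. {..<mm i * n})" by auto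
      show "\<forall>x\<in>SIGMA i:{1..r}. {..<mm i * n}. f x \<in> {1..k}"
        using f unfolding equitable_coloring_def proper_coloring_def by blast
      show "\<forall>c\<in>{1..k}. \<forall>d\<in>{1..k}. card {x \<in> SIGMA i:{1..r}. {..<mm i * n}. f x = c}
          \<le> card {x \<in> SIGMA i:{1..r}. {..<mm i * n}. f x = d} + 1"
        using f unfolding equitable_coloring_def by blast
      show "\<forall>x\<in>SIGMA i:{1..r}. {..<mm i * n}. fst x \<in> {1..r}" by auto
      show "\<forall>i\<in>{1..r}. card {x \<in> SIGMA i:{1..r}. {..<mm i * n}. fst x = i} = mm i * n"
        using part1[of _ r "\<lambda>i. mm i * n"] by simp
      show "\<forall>x\<in>SIGMA i:{1..r}. {..<mm i * n}. \<forall>y\<in>SIGMA i:{1..r}. {..<mm i * n}.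
          f x = f y \<longrightarrow> m < card {z \<in> SIGMA i:{1..r}. {..<mm i * n}. f z = f x} \<longrightarrow> fst x = fst y"
        using f unfolding equitable_coloring_def proper_coloring_def multipartite_E_def by blast
    qed (use m_def mpos mn k_def hyp' in auto)
  qed
  have g2: "\<not> equitably_colorable (kron_V (multipartite_V r mm) (complete_V n))
          (kron_E multipartite_E complete_E) k"
  proof
    let ?V = "(SIGMA i:{1..r}. {..<mm i}) \<times> {0..<n}"
    assume "equitably_colorable (kron_V (multipartite_V r mm) (complete_V n))
          (kron_E multipartite_E complete_E) k"
    then obtain f where f: "equitable_coloring ?V (kron_E multipartite_E complete_E) k f"
      unfolding equitably_colorable_def mV kron_V_def complete_V_def by blast
    have pcf: "proper_coloring ?V (kron_E multipartite_E complete_E) k f"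
      using f unfolding equitable_coloring_def by blast
    show False
    proof (rule core[where V="?V" and f=f and p="\<lambda>x. fst (fst x)" and k=k and r=r
          and mm=mm and n=n and m=m])
      show "finite ?V" by auto
      show "\<forall>x\<in>?V. f x \<in> {1..k}"
        using pcf unfolding proper_coloring_def by blast
      show "\<forall>c\<in>{1..k}. \<forall>d\<in>{1..k}. card {x \<in> ?V. f x = c} \<le> card {x \<in> ?V. f x = d} + 1"
        using f unfolding equitable_coloring_def by blast
      show "\<forall>x\<in>?V. fst (fst x) \<in> {1..r}" by auto
      show "\<forall>i\<in>{1..r}. card {x \<in> ?V. fst (fst x) = i} = mm i * n"
        using part2[of _ r mm n] by (simp add: card_cartesian_product)
      show "\<forall>x\<in>?V. \<forall>y\<in>?V. f x = f y \<longrightarrow> m < card {z \<in> ?V. f z = f x} \<longrightarrow> fst (fst x) = fst (fst y)"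
      proof (intro ballI impI)
        fix x y assume x: "x \<in> ?V" and y: "y \<in> ?V" and fxy: "f x = f y"
          and big: "m < card {z \<in> ?V. f z = f x}"
        show "fst (fst x) = fst (fst y)"
        proof (rule ccontr)
          assume "fst (fst x) \<noteq> fst (fst y)"
          from kron_sp[OF pcf x y fxy this] big show False unfolding m_def by simp
        qed
      qed
    qed (use m_def mpos mn k_def hyp' in auto)
  qed
  show ?thesis using ndvd g1 g2 knat unfolding m_def[symmetric] by simp
qed

end
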